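(* Let $D$ be a strongly connected digraph, $T$ a DFS tree of $D$ rooted at $r$ of length $t\ge 1$ with levels $V_0,\ldots,V_t$, and let $G^D$ be the backward spine of $D$ relative to $T$. If $c'$ is a proper coloring of $G^D$ with $\chi(G^D)$ colors, then the map $c$ on $V(D)$ defined by $c(v)=c'(V_i)$ for $v\in V_i$ is an acyclic coloring of $D$. In particular, $\chi_A(D)\le\chi(G^D)$.
   Context: Digraphs are finite and loopless; paths and cycles are directed; $l(\cdot)$ denotes length. A DFS tree $T$ of a strongly connected digraph $D$ rooted at $r$ is the spanning out-branching produced by a depth-first search started at $r$. $P_u$ is the unique $ru$-path in $T$; the length $t$ of $T$ is the length of a longest path in $T$; the levels are $V_i=\{u: l(P_u)=i\}$, $0\le i\le t$. A vertex $u$ is a descendant of $v$ if $T$ has a $vu$-path; an arc $(u,v)$ is a backward arc if $u$ is a descendant of $v$. The backward spine $G^D$ is the undirected graph with vertex set $\{V_0,\ldots,V_t\}$ in which, for $i>j$, $V_iV_j$ is an edge iff there is a backward arc $(u,v)$ with $u\in V_i$, $v\in V_j$. An acyclic coloring is a coloring whose color classes induce no directed cycle; $\chi_A$ is the minimum number of colors in such a coloring. *)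

theory Defs
  imports Main
begin

definition digraph :: "'a set \<Rightarrow> ('a \<times> 'a) set \<Rightarrow> bool" where
  "digraph V A \<longleftrightarrow> finite V \<and> V \<noteq> {} \<and> A \<subseteq> V \<times> V \<and> (\<forall>v. (v, v) \<notin> A)"

definition strongly_connected :: "'a set \<Rightarrow> ('a \<times> 'a) set \<Rightarrow> bool" where
  "strongly_connected V A \<longleftrightarrow> (\<forall>u\<in>V. \<forall>v\<in>V. (u, v) \<in> A\<^sup>*)"

definition out_branching :: "'a set \<Rightarrow> ('a \<times> 'a) set \<Rightarrow> 'a \<Rightarrow> ('a \<times> 'a) set \<Rightarrow> bool" where
  "out_branching V A r T \<longleftrightarrow> r \<in> V \<and> T \<subseteq> A \<and>
     (\<forall>u. (u, r) \<notin> T) \<and>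
     (\<forall>v\<in>V - {r}. \<exists>!u. (u, v) \<in> T) \<and>
     (\<forall>v\<in>V. (r, v) \<in> T\<^sup>*)"

text \<open>T is a DFS tree of (V,A) rooted at r: a spanning out-branching admitting a
  discovery order (preorder of T) in which every arc leading to a later
  discovered vertex ends at a descendant of its tail.  This is the standard
  characterization of the trees produced by depth-first search.\<close>
definition dfs_tree :: "'a set \<Rightarrow> ('a \<times> 'a) set \<Rightarrow> 'a \<Rightarrow> ('a \<times> 'a) set \<Rightarrow> bool" where
  "dfs_tree V A r T \<longleftrightarrow> out_branching V A r T \<and>
     (\<exists>ord :: 'a \<Rightarrow> nat. inj_on ord V \<and>
        (\<forall>(u, v)\<in>T. ord u < ord v) \<and>
        (\<forall>u\<in>V. \<forall>w\<in>V. \<forall>x\<in>V. (u, w) \<in> T\<^sup>* \<and> ord u \<le> ord x \<and> ord x \<le> ord w \<longrightarrow> (u, x) \<in> T\<^sup>*) \<and>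
        (\<forall>(u, v)\<in>A. ord u < ord v \<longrightarrow> (u, v) \<in> T\<^sup>*))"

definition level :: "('a \<times> 'a) set \<Rightarrow> 'a \<Rightarrow> 'a \<Rightarrow> nat" where
  "level T r u = (LEAST n. (r, u) \<in> T ^^ n)"

text \<open>Length t of T (length of a longest path in T = maximal level).\<close>
definition tree_length :: "'a set \<Rightarrow> ('a \<times> 'a) set \<Rightarrow> 'a \<Rightarrow> nat" where
  "tree_length V T r = Max (level T r ` V)"

definition level_set :: "'a set \<Rightarrow> ('a \<times> 'a) set \<Rightarrow> 'a \<Rightarrow> nat \<Rightarrow> 'a set" where
  "level_set V T r i = {u \<in> V. level T r u = i}"

definition backward_arc :: "('a \<times> 'a) set \<Rightarrow> ('a \<times> 'a) set \<Rightarrow> 'a \<Rightarrow> 'a \<Rightarrow> bool" where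
  "backward_arc A T u v \<longleftrightarrow> (u, v) \<in> A \<and> (v, u) \<in> T\<^sup>*"

text \<open>Backward spine: vertex V_i is represented by its index i \<in> {0..t}.\<close>
definition spine_vertices :: "'a set \<Rightarrow> ('a \<times> 'a) set \<Rightarrow> 'a \<Rightarrow> nat set" where
  "spine_vertices V T r = {0..tree_length V T r}"

definition spine_edge :: "'a set \<Rightarrow> ('a \<times> 'a) set \<Rightarrow> 'a \<Rightarrow> ('a \<times> 'a) set \<Rightarrow> nat \<Rightarrow> nat \<Rightarrow> bool" where
  "spine_edge V A r T i j \<longleftrightarrow>
     (i > j \<and> (\<exists>u\<in>level_set V T r i. \<exists>v\<in>level_set V T r j. backward_arc A T u v)) \<or>
     (j > i \<and> (\<exists>u\<in>level_set V T r j. \<exists>v\<in>level_set V T r i. backward_arc A T u v))"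

definition proper_coloring :: "'b set \<Rightarrow> ('b \<Rightarrow> 'b \<Rightarrow> bool) \<Rightarrow> ('b \<Rightarrow> nat) \<Rightarrow> nat \<Rightarrow> bool" where
  "proper_coloring W E c k \<longleftrightarrow> (\<forall>x\<in>W. c x < k) \<and> (\<forall>x\<in>W. \<forall>y\<in>W. E x y \<longrightarrow> c x \<noteq> c y)"

definition chromatic_number :: "'b set \<Rightarrow> ('b \<Rightarrow> 'b \<Rightarrow> bool) \<Rightarrow> nat" where
  "chromatic_number W E = (LEAST k. \<exists>c. proper_coloring W E c k)"

definition acyclic_coloring :: "'a set \<Rightarrow> ('a \<times> 'a) set \<Rightarrow> ('a \<Rightarrow> nat) \<Rightarrow> nat \<Rightarrow> bool" where
  "acyclic_coloring V A c k \<longleftrightarrow> (\<forall>v\<in>V. c v < k) \<and>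
     (\<forall>i. acyclic (A \<inter> ({v\<in>V. c v = i} \<times> {v\<in>V. c v = i})))"

definition acyclic_chromatic_number :: "'a set \<Rightarrow> ('a \<times> 'a) set \<Rightarrow> nat" where
  "acyclic_chromatic_number V A = (LEAST k. \<exists>c. acyclic_coloring V A c k)"

end

theory Submission
  imports Defs
begin

lemma relpow_unique_tree:
  assumes ob: "out_branching V A r T" and AV: "A \<subseteq> V \<times> V"
  shows "(r, u) \<in> T ^^ n \<Longrightarrow> (r, u) \<in> T ^^ m \<Longrightarrow> n = m"
proof (induction n arbitrary: u m)
  case 0
  then have "u = r" by simp
  show ?case
  proof (cases m)
    case (Suc m')
    with 0 \<open>u = r\<close> obtain y where "(y, r) \<in> T" by (metis relpow_Suc_E)
    with ob show ?thesis unfolding out_branching_def by blast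
  qed simp
next
  case (Suc n)
  from Suc.prems(1) obtain x where x: "(r, x) \<in> T ^^ n" "(x, u) \<in> T" by (metis relpow_Suc_E)
  have TV: "T \<subseteq> V \<times> V" using ob AV unfolding out_branching_def by blast
  have ur: "u \<noteq> r" using x(2) ob unfolding out_branching_def by blast
  have uV: "u \<in> V" using x(2) TV by blast
  show ?case
  proof (cases m)
    case 0
    with Suc.prems(2) ur show ?thesis by simp
  next
    case (Suc m')
    with Suc.prems(2) obtain y where y: "(r, y) \<in> T ^^ m'" "(y, u) \<in> T" by (metis relpow_Suc_E)
    have "x = y" using ob uV ur x(2) y(2) unfolding out_branching_def by blast
    with Suc.IH[OF x(1)] y(1) Suc show ?thesis by simp
  qed
qed

lemma level_of:
  assumes ob: "out_branching V A r T" and AV: "A \<subseteq> V \<times> V" and "(r, u) \<in> T ^^ n"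
  shows "level T r u = n"
proof -
  have "(r, u) \<in> T ^^ level T r u"
    unfolding level_def using assms(3) by (rule LeastI)
  then show ?thesis using relpow_unique_tree[OF ob AV] assms(3) by blast
qed

lemma level_desc:
  assumes ob: "out_branching V A r T" and AV: "A \<subseteq> V \<times> V" and vV: "v \<in> V"
    and d: "(v, u) \<in> T\<^sup>*" and ne: "u \<noteq> v"
  shows "level T r v < level T r u"
proof -
  from ob vV have "(r, v) \<in> T\<^sup>*" unfolding out_branching_def by blast
  then obtain n where n: "(r, v) \<in> T ^^ n" using rtrancl_power by blast
  from d obtain k where k: "(v, u) \<in> T ^^ k" using rtrancl_power by blast
  with ne have "k > 0" by (cases k) auto
  from n k have "(r, u) \<in> T ^^ (n + k)" by (simp add: relpow_add relcomp.relcompI)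
  then have "level T r u = n + k" by (rule level_of[OF ob AV])
  moreover have "level T r v = n" by (rule level_of[OF ob AV n])
  ultimately show ?thesis using \<open>k > 0\<close> by simp
qed

theorem mainTheorem9:
  fixes V :: "'a set" and A :: "('a \<times> 'a) set" and r :: 'a and T :: "('a \<times> 'a) set"
    and c' :: "nat \<Rightarrow> nat"
  assumes "digraph V A"
    and "strongly_connected V A"
    and "dfs_tree V A r T"
    and "tree_length V T r \<ge> 1"
    and "proper_coloring (spine_vertices V T r) (spine_edge V A r T) c'
           (chromatic_number (spine_vertices V T r) (spine_edge V A r T))"
  shows "acyclic_coloring V A (\<lambda>v. c' (level T r v))
           (chromatic_number (spine_vertices V T r) (spine_edge V A r T))
       \<and> acyclic_chromatic_number V A
           \<le> chromatic_number (spine_vertices V T r) (spine_edge V A r T)"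
proof -
  let ?k = "chromatic_number (spine_vertices V T r) (spine_edge V A r T)"
  let ?c = "\<lambda>v. c' (level T r v)"
  have dg: "finite V" "A \<subseteq> V \<times> V" "\<And>v. (v, v) \<notin> A" using assms(1) unfolding digraph_def by auto
  have ob: "out_branching V A r T" using assms(3) unfolding dfs_tree_def by blast
  obtain ord :: "'a \<Rightarrow> nat" where
    o_int: "\<forall>u\<in>V. \<forall>w\<in>V. \<forall>x\<in>V. (u, w) \<in> T\<^sup>* \<and> ord u \<le> ord x \<and> ord x \<le> ord w \<longrightarrow> (u, x) \<in> T\<^sup>*"
    and o_fw: "\<forall>(u, v)\<in>A. ord u < ord v \<longrightarrow> (u, v) \<in> T\<^sup>*"
    using assms(3) unfolding dfs_tree_def by blast
  have pc: "\<forall>x\<in>spine_vertices V T r. c' x < ?k"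
    "\<forall>x\<in>spine_vertices V T r. \<forall>y\<in>spine_vertices V T r. spine_edge V A r T x y \<longrightarrow> c' x \<noteq> c' y"
    using assms(5) unfolding proper_coloring_def by auto
  have lvin: "level T r v \<in> spine_vertices V T r" if "v \<in> V" for v
    unfolding spine_vertices_def tree_length_def using that dg(1) by auto
  have acyc: "acyclic (A \<inter> ({v\<in>V. ?c v = i} \<times> {v\<in>V. ?c v = i}))" for i
  proof (rule acyclicI, rule allI, rule notI)
    let ?R = "A \<inter> ({v\<in>V. ?c v = i} \<times> {v\<in>V. ?c v = i})"
    fix x assume xx: "(x, x) \<in> ?R\<^sup>+"
    define C where "C = {z. (x, z) \<in> ?R\<^sup>* \<and> (z, x) \<in> ?R\<^sup>*}"
    have RV: "?R\<^sup>+ \<subseteq> {v\<in>V. ?c v = i} \<times> {v\<in>V. ?c v = i}"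
      by (rule trancl_subset_Sigma) auto
    have xV: "x \<in> V" "?c x = i" using xx RV by auto
    have CV: "C \<subseteq> V"
    proof
      fix z assume "z \<in> C"
      then have "(x, z) \<in> ?R\<^sup>*" by (simp add: C_def)
      then show "z \<in> V" using xV by (induction rule: rtrancl_induct) auto
    qed
    have "x \<in> C" by (simp add: C_def)
    have "finite (ord ` C)" using CV dg(1) finite_subset by blast
    moreover have "ord ` C \<noteq> {}" using \<open>x \<in> C\<close> by blast
    ultimately have "Min (ord ` C) \<in> ord ` C" by (rule Min_in)
    then obtain w where wC: "w \<in> C" and wo: "ord w = Min (ord ` C)" by (metis imageE)
    have wmin: "\<forall>z\<in>C. ord w \<le> ord z" using wo \<open>finite (ord ` C)\<close> by simp
    have desc: "(w, z) \<in> T\<^sup>*" if "(w, z) \<in> ?R\<^sup>*" "(z, x) \<in> ?R\<^sup>*" for z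
      using that
    proof (induction rule: rtrancl_induct)
      case base then show ?case by simp
    next
      case (step y z)
      have yx: "(y, x) \<in> ?R\<^sup>*" using step by (meson converse_rtrancl_into_rtrancl)
      have wy: "(w, y) \<in> T\<^sup>*" using step.IH yx .
      have xw: "(x, w) \<in> ?R\<^sup>*" using wC by (simp add: C_def)
      have yC: "y \<in> C" using xw step(1) yx by (simp add: C_def)
      have "(x, z) \<in> ?R\<^sup>*" by (rule rtrancl_trans[OF xw rtrancl_into_rtrancl[OF step(1) step(2)]])
      then have zC: "z \<in> C" using step.prems unfolding C_def by simp
      have yzA: "(y, z) \<in> A" using step(2) by blast
      show ?case
      proof (cases "ord y < ord z")
        case True
        then have "(y, z) \<in> T\<^sup>*" using o_fw yzA by blast
        then show ?thesis using wy by simp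
      next
        case False
        have "ord w \<le> ord z" using wmin zC by blast
        moreover have "ord z \<le> ord y" using False by simp
        moreover have "w \<in> V" "y \<in> V" "z \<in> V" using wC yC zC CV by auto
        ultimately show ?thesis using o_int wy by blast
      qed
    qed
    have wx: "(w, x) \<in> ?R\<^sup>*" and xw: "(x, w) \<in> ?R\<^sup>*" using wC unfolding C_def by auto
    have ww: "(w, w) \<in> ?R\<^sup>+"
      by (rule rtrancl_trancl_trancl[OF wx trancl_rtrancl_trancl[OF xx xw]])
    then obtain y where wy: "(w, y) \<in> ?R\<^sup>*" and yw: "(y, w) \<in> ?R"
      by (meson tranclD2)
    have "(y, x) \<in> ?R\<^sup>*" by (rule converse_rtrancl_into_rtrancl[OF yw wx])
    then have dwy: "(w, y) \<in> T\<^sup>*" using desc wy by blast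
    have yne: "y \<noteq> w" using yw dg(3) by blast
    have wV: "w \<in> V" using wC CV by blast
    have yV: "y \<in> V" using yw by blast
    have lt: "level T r w < level T r y" by (rule level_desc[OF ob dg(2) wV dwy yne])
    have "spine_edge V A r T (level T r y) (level T r w)"
    proof -
      have "y \<in> level_set V T r (level T r y)" "w \<in> level_set V T r (level T r w)"
        using yV wV by (auto simp: level_set_def)
      moreover have "backward_arc A T y w" using yw dwy by (auto simp: backward_arc_def)
      ultimately show ?thesis unfolding spine_edge_def using lt by blast
    qed
    then have "?c y \<noteq> ?c w" using pc(2) lvin[OF yV] lvin[OF wV] by simp
    moreover have "?c y = i" "?c w = i" using yw by auto
    ultimately show False by simp
  qed
  have ac: "acyclic_coloring V A ?c ?k"
    unfolding acyclic_coloring_def using pc(1) lvin acyc by blast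
  have "acyclic_chromatic_number V A \<le> ?k"
    unfolding acyclic_chromatic_number_def by (rule Least_le) (use ac in blast)
  with ac show ?thesis by blast
qed

end
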